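(* Assume condition (H). Then for all integers $0\le m\le n$ we have $d_{m,n}\le d_{m-1,n}$, and for all integers $-1\le m\le n$ we have $d_{m,n}\le d_{m,n+1}$. That is, in the region $m\le n$, $d_{m,n}$ is non-increasing in $m$ and non-decreasing in $n$.
   Context: Let $\mathbb{N}=\{0,1,2,\dots\}$. Fix a sequence $(\pi^n)_{n\in\mathbb{N}}$ where each $\pi^n=(\pi^n_i)_{i\in\mathbb{N}}$ is a probability distribution on $\mathbb{N}$ with support contained in $\{0,\dots,n\}$, and $\pi^n\ne\pi^m$ for $m\ne n$. Define reals $d_{m,n}$ for $m,n\in\mathbb{N}\cup\{-1\}$ recursively as follows: $d_{-1,-1}=0$, $d_{-1,j}=d_{j,-1}=1$ for $j\in\mathbb{N}$, and for $m,n\in\mathbb{N}$, $$d_{m,n}=\min_{z\in\mathcal{F}_{m,n}}\sum_{i=0}^m\sum_{j=0}^n z_{i,j}\,d_{i-1,j-1},$$ where $\mathcal{F}_{m,n}$ is the set of arrays $z=(z_{i,j})_{0\le i\le m,\,0\le j\le n}$ with $z_{i,j}\ge0$, $\sum_{j=0}^n z_{i,j}=\pi^m_i$ for all $i\le m$, and $\sum_{i=0}^m z_{i,j}=\pi^n_j$ for all $j\le n$. Condition (H) means: for every $n\ge1$, $\pi^n_n>0$ and $0\le\pi^n_i\le\pi^{n-1}_i$ for all $i<n$. *)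

theory Defs
  imports "HOL-Analysis.Analysis"
begin

definition admissible_seq :: "(nat \<Rightarrow> nat \<Rightarrow> real) \<Rightarrow> bool" where
  "admissible_seq \<pi> \<longleftrightarrow>
     (\<forall>n i. 0 \<le> \<pi> n i) \<and>
     (\<forall>n i. n < i \<longrightarrow> \<pi> n i = 0) \<and>
     (\<forall>n. (\<Sum>i\<le>n. \<pi> n i) = 1) \<and>
     (\<forall>m n. m \<noteq> n \<longrightarrow> \<pi> m \<noteq> \<pi> n)"

definition cond_H :: "(nat \<Rightarrow> nat \<Rightarrow> real) \<Rightarrow> bool" where
  "cond_H \<pi> \<longleftrightarrow> (\<forall>n\<ge>1. \<pi> n n > 0 \<and> (\<forall>i<n. 0 \<le> \<pi> n i \<and> \<pi> n i \<le> \<pi> (n-1) i))"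

text \<open>Couplings \<open>\<F>_{m,n}\<close>: arrays z indexed by \<open>0\<le>i\<le>m, 0\<le>j\<le>n\<close>
  (values outside this range are irrelevant).\<close>
definition couplings :: "(nat \<Rightarrow> nat \<Rightarrow> real) \<Rightarrow> nat \<Rightarrow> nat \<Rightarrow> (nat \<Rightarrow> nat \<Rightarrow> real) set" where
  "couplings \<pi> m n = {z. (\<forall>i\<le>m. \<forall>j\<le>n. 0 \<le> z i j) \<and>
       (\<forall>i\<le>m. (\<Sum>j\<le>n. z i j) = \<pi> m i) \<and>
       (\<forall>j\<le>n. (\<Sum>i\<le>m. z i j) = \<pi> n j)}"

text \<open>\<open>dd \<pi> a b = d_{a-1,b-1}\<close> (shifted so that indices are natural numbers).\<close>
function dd :: "(nat \<Rightarrow> nat \<Rightarrow> real) \<Rightarrow> nat \<Rightarrow> nat \<Rightarrow> real" where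
  "dd \<pi> a b =
     (if a = 0 \<and> b = 0 then 0
      else if a = 0 \<or> b = 0 then 1
      else Inf ((\<lambda>z. \<Sum>i\<le>a-1. \<Sum>j\<le>b-1. z i j * dd \<pi> i j) ` couplings \<pi> (a-1) (b-1)))"
  by auto
termination
  by (relation "Wellfounded.measure (\<lambda>(\<pi>,a,b). a + b)") auto

definition d :: "(nat \<Rightarrow> nat \<Rightarrow> real) \<Rightarrow> int \<Rightarrow> int \<Rightarrow> real" where
  "d \<pi> m n = dd \<pi> (nat (m + 1)) (nat (n + 1))"

end

theory Submission
  imports Defs
begin


declare dd.simps[simp del]

definition cplg :: "(nat \<Rightarrow> real) \<Rightarrow> (nat \<Rightarrow> real) \<Rightarrow> nat \<Rightarrow> nat \<Rightarrow> (nat \<Rightarrow> nat \<Rightarrow> real) \<Rightarrow> bool" where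
  "cplg \<mu> \<nu> m n z \<longleftrightarrow> (\<forall>i\<le>m. \<forall>j\<le>n. 0 \<le> z i j) \<and>
       (\<forall>i\<le>m. (\<Sum>j\<le>n. z i j) = \<mu> i) \<and> (\<forall>j\<le>n. (\<Sum>i\<le>m. z i j) = \<nu> j)"

definition cost :: "(nat \<Rightarrow> nat \<Rightarrow> real) \<Rightarrow> nat \<Rightarrow> nat \<Rightarrow> (nat \<Rightarrow> nat \<Rightarrow> real) \<Rightarrow> real" where
  "cost C m n z = (\<Sum>i\<le>m. \<Sum>j\<le>n. z i j * C i j)"

lemma couplings_iff: "z \<in> couplings \<pi> m n \<longleftrightarrow> cplg (\<pi> m) (\<pi> n) m n z"
  by (simp add: couplings_def cplg_def)

lemma dd_00: "dd \<pi> 0 0 = 0" by (subst dd.simps) simp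
lemma dd_0S: "dd \<pi> 0 (Suc n) = 1" by (subst dd.simps) simp
lemma dd_S0: "dd \<pi> (Suc n) 0 = 1" by (subst dd.simps) simp
lemma dd_SS: "dd \<pi> (Suc m) (Suc n) = Inf (cost (dd \<pi>) m n ` couplings \<pi> m n)"
  by (subst dd.simps) (simp add: cost_def)

lemma dd_0L: "dd \<pi> 0 b = (if b = 0 then 0 else 1)"
  by (cases b) (auto simp: dd_00 dd_0S)
lemma dd_0R: "dd \<pi> a 0 = (if a = 0 then 0 else 1)"
  by (cases a) (auto simp: dd_00 dd_S0)

locale adm =
  fixes \<pi> :: "nat \<Rightarrow> nat \<Rightarrow> real"
  assumes A: "admissible_seq \<pi>"
begin

lemma pos: "0 \<le> \<pi> n i" using A by (simp add: admissible_seq_def)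
lemma supp: "n < i \<Longrightarrow> \<pi> n i = 0" using A by (simp add: admissible_seq_def)
lemma sum1: "(\<Sum>i\<le>n. \<pi> n i) = 1" using A by (simp add: admissible_seq_def)

lemma prod_cpl: "(\<lambda>i j. \<pi> m i * \<pi> n j) \<in> couplings \<pi> m n"
  by (simp add: couplings_iff cplg_def pos sum1 flip: sum_distrib_left sum_distrib_right)

lemma cpl_ne: "couplings \<pi> m n \<noteq> {}" using prod_cpl by blast

lemma dd_nonneg: "0 \<le> dd \<pi> a b"
proof (induction "a+b" arbitrary: a b rule: less_induct)
  case less
  show ?case
  proof (cases a)
    case 0 then show ?thesis by (simp add: dd_0L)
  next
    case (Suc m)
    show ?thesis
    proof (cases b)
      case 0 then show ?thesis by (simp add: dd_0R)
    next
      case (Suc n)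
      have "\<forall>x \<in> cost (dd \<pi>) m n ` couplings \<pi> m n. 0 \<le> x"
      proof
        fix x assume "x \<in> cost (dd \<pi>) m n ` couplings \<pi> m n"
        then obtain z where z: "z \<in> couplings \<pi> m n" and x: "x = cost (dd \<pi>) m n z" by auto
        have "0 \<le> z i j * dd \<pi> i j" if "i \<le> m" "j \<le> n" for i j
          using z that less[of i j] \<open>a = Suc m\<close> \<open>b = Suc n\<close>
          by (auto simp: couplings_iff cplg_def intro!: mult_nonneg_nonneg)
        then show "0 \<le> x" unfolding x cost_def by (auto intro!: sum_nonneg)
      qed
      then show ?thesis using \<open>a = Suc m\<close> \<open>b = Suc n\<close> cpl_ne
        by (auto simp: dd_SS intro!: cInf_greatest)
    qed
  qed
qed

lemma cost_nonneg: "cplg \<mu> \<nu> m n z \<Longrightarrow> 0 \<le> cost (dd \<pi>) m n z"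
  unfolding cost_def cplg_def by (auto intro!: sum_nonneg mult_nonneg_nonneg dd_nonneg)

lemma dd_le_cost: "z \<in> couplings \<pi> m n \<Longrightarrow> dd \<pi> (Suc m) (Suc n) \<le> cost (dd \<pi>) m n z"
  unfolding dd_SS
  apply (rule cInf_lower)
   apply blast
  apply (rule bdd_belowI[where m=0])
  using cost_nonneg by (auto simp: couplings_iff)

lemma dd_ge: "(\<And>z. z \<in> couplings \<pi> m n \<Longrightarrow> x \<le> cost (dd \<pi>) m n z) \<Longrightarrow> x \<le> dd \<pi> (Suc m) (Suc n)"
  unfolding dd_SS using cpl_ne by (auto intro!: cInf_greatest)

lemma dd_le1: "dd \<pi> a b \<le> 1"
proof (induction "a+b" arbitrary: a b rule: less_induct)
  case less
  show ?case
  proof (cases a)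
    case 0 then show ?thesis by (simp add: dd_0L)
  next
    case (Suc m)
    show ?thesis
    proof (cases b)
      case 0 then show ?thesis by (simp add: dd_0R)
    next
      case (Suc n)
      have "cost (dd \<pi>) m n (\<lambda>i j. \<pi> m i * \<pi> n j) \<le> (\<Sum>i\<le>m. \<Sum>j\<le>n. \<pi> m i * \<pi> n j * 1)"
        unfolding cost_def
        using less \<open>a = Suc m\<close> \<open>b = Suc n\<close>
        by (intro sum_mono mult_left_mono) (auto simp: pos)
      also have "\<dots> = 1" by (simp add: sum1 pos flip: sum_distrib_left sum_distrib_right)
      finally show ?thesis using dd_le_cost[OF prod_cpl, of m n] \<open>a = Suc m\<close> \<open>b = Suc n\<close> by simp
    qed
  qed
qed

lemma diag_cpl: "(\<lambda>i j. if i = j then \<pi> m i else 0) \<in> couplings \<pi> m m"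
  by (auto simp: couplings_iff cplg_def pos if_distrib sum.delta cong: if_cong)

lemma dd_diag: "dd \<pi> a a = 0"
proof (induction a rule: less_induct)
  case (less a)
  show ?case
  proof (cases a)
    case 0 then show ?thesis by (simp add: dd_00)
  next
    case (Suc m)
    have "cost (dd \<pi>) m m (\<lambda>i j. if i = j then \<pi> m i else 0) = (\<Sum>i\<le>m. \<pi> m i * dd \<pi> i i)"
      unfolding cost_def by (intro sum.cong refl) (simp add: if_distrib[where f="\<lambda>x. x * _"] sum.delta cong: if_cong)
    also have "\<dots> = 0" using less Suc by simp
    finally show ?thesis using dd_le_cost[OF diag_cpl, of m] dd_nonneg[of a a] Suc by simp
  qed
qed

end


lemma cplg_zero_col:
  assumes "cplg \<mu> \<nu> a b z" "j \<le> b" "\<nu> j = 0" "i \<le> a"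
  shows "z i j = 0"
proof -
  have "(\<Sum>i\<le>a. z i j) = 0" using assms by (simp add: cplg_def)
  moreover have "\<forall>i\<in>{..a}. 0 \<le> z i j" using assms by (simp add: cplg_def)
  ultimately show ?thesis using assms(4) sum_nonneg_eq_0_iff[of "{..a}" "\<lambda>i. z i j"] by auto
qed

lemma cplg_zero_row:
  assumes "cplg \<mu> \<nu> a b z" "i \<le> a" "\<mu> i = 0" "j \<le> b"
  shows "z i j = 0"
proof -
  have "(\<Sum>j\<le>b. z i j) = 0" using assms by (simp add: cplg_def)
  moreover have "\<forall>j\<in>{..b}. 0 \<le> z i j" using assms by (simp add: cplg_def)
  ultimately show ?thesis using assms(4) sum_nonneg_eq_0_iff[of "{..b}" "\<lambda>j. z i j"] by auto
qed

lemma cplg_nu_nonneg: "cplg \<mu> \<nu> a b z \<Longrightarrow> j \<le> b \<Longrightarrow> 0 \<le> \<nu> j"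
  unfolding cplg_def by (metis atMost_iff sum_nonneg)

lemma cplg_mu_nonneg: "cplg \<mu> \<nu> a b z \<Longrightarrow> i \<le> a \<Longrightarrow> 0 \<le> \<mu> i"
  unfolding cplg_def by (metis atMost_iff sum_nonneg)

lemma glue:
  assumes z1: "cplg \<mu> \<nu> a b z1" and z2: "cplg \<nu> \<rho> b c z2"
    and tri: "\<And>i j k. i \<le> a \<Longrightarrow> j \<le> b \<Longrightarrow> k \<le> c \<Longrightarrow> C i k \<le> C i j + C j k"
  shows "\<exists>u. cplg \<mu> \<rho> a c u \<and> cost C a c u \<le> cost C a b z1 + cost C b c z2"
proof -
  define w where "w i j k = (if \<nu> j = 0 then 0 else z1 i j * z2 j k / \<nu> j)" for i j k
  define u where "u i k = (\<Sum>j\<le>b. w i j k)" for i k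
  have wnn: "0 \<le> w i j k" if "i \<le> a" "j \<le> b" "k \<le> c" for i j k
    using z1 z2 that cplg_nu_nonneg[OF z1 that(2)] unfolding w_def cplg_def
    by (auto intro!: divide_nonneg_nonneg mult_nonneg_nonneg)
  have wk: "(\<Sum>k\<le>c. w i j k) = z1 i j" if "i \<le> a" "j \<le> b" for i j
  proof (cases "\<nu> j = 0")
    case True then show ?thesis using cplg_zero_col[OF z1 that(2) True that(1)] by (simp add: w_def)
  next
    case False
    have "(\<Sum>k\<le>c. w i j k) = z1 i j * (\<Sum>k\<le>c. z2 j k) / \<nu> j"
      using False by (simp add: w_def sum_distrib_left sum_divide_distrib)
    also have "\<dots> = z1 i j" using z2 that False by (simp add: cplg_def)
    finally show ?thesis .
  qed
  have wi: "(\<Sum>i\<le>a. w i j k) = z2 j k" if "j \<le> b" "k \<le> c" for j k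
  proof (cases "\<nu> j = 0")
    case True then show ?thesis using cplg_zero_row[OF z2 that(1) True that(2)] by (simp add: w_def)
  next
    case False
    have "(\<Sum>i\<le>a. w i j k) = (\<Sum>i\<le>a. z1 i j) * z2 j k / \<nu> j"
      using False by (simp add: w_def sum_distrib_right sum_divide_distrib)
    also have "\<dots> = z2 j k" using z1 that False by (simp add: cplg_def)
    finally show ?thesis .
  qed
  have "cplg \<mu> \<rho> a c u"
    unfolding cplg_def
  proof (intro conjI allI impI)
    fix i k assume "i \<le> a" "k \<le> c"
    then show "0 \<le> u i k" unfolding u_def by (auto intro!: sum_nonneg wnn)
  next
    fix i assume i: "i \<le> a"
    have "(\<Sum>k\<le>c. u i k) = (\<Sum>j\<le>b. \<Sum>k\<le>c. w i j k)" unfolding u_def by (rule sum.swap)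
    also have "\<dots> = (\<Sum>j\<le>b. z1 i j)" using i wk by simp
    also have "\<dots> = \<mu> i" using z1 i by (simp add: cplg_def)
    finally show "(\<Sum>k\<le>c. u i k) = \<mu> i" .
  next
    fix k assume k: "k \<le> c"
    have "(\<Sum>i\<le>a. u i k) = (\<Sum>j\<le>b. \<Sum>i\<le>a. w i j k)" unfolding u_def by (rule sum.swap)
    also have "\<dots> = (\<Sum>j\<le>b. z2 j k)" using k wi by simp
    also have "\<dots> = \<rho> k" using z2 k by (simp add: cplg_def)
    finally show "(\<Sum>i\<le>a. u i k) = \<rho> k" .
  qed
  moreover have "cost C a c u \<le> cost C a b z1 + cost C b c z2"
  proof -
    have "cost C a c u = (\<Sum>i\<le>a. \<Sum>k\<le>c. \<Sum>j\<le>b. w i j k * C i k)"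
      unfolding cost_def u_def by (simp add: sum_distrib_right)
    also have "\<dots> \<le> (\<Sum>i\<le>a. \<Sum>k\<le>c. \<Sum>j\<le>b. w i j k * C i j + w i j k * C j k)"
      by (intro sum_mono) (simp add: wnn tri mult_left_mono flip: distrib_left)
    also have "\<dots> = (\<Sum>i\<le>a. \<Sum>k\<le>c. \<Sum>j\<le>b. w i j k * C i j) + (\<Sum>i\<le>a. \<Sum>k\<le>c. \<Sum>j\<le>b. w i j k * C j k)"
      by (simp add: sum.distrib)
    also have "(\<Sum>i\<le>a. \<Sum>k\<le>c. \<Sum>j\<le>b. w i j k * C i j) = (\<Sum>i\<le>a. \<Sum>j\<le>b. (\<Sum>k\<le>c. w i j k) * C i j)"
      by (simp add: sum_distrib_right sum.swap[where A="{..c}"])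
    also have "\<dots> = cost C a b z1" unfolding cost_def by (simp add: wk)
    also have "(\<Sum>i\<le>a. \<Sum>k\<le>c. \<Sum>j\<le>b. w i j k * C j k) = (\<Sum>j\<le>b. \<Sum>k\<le>c. (\<Sum>i\<le>a. w i j k) * C j k)"
    proof -
      have "(\<Sum>i\<le>a. \<Sum>k\<le>c. \<Sum>j\<le>b. w i j k * C j k) = (\<Sum>i\<le>a. \<Sum>j\<le>b. \<Sum>k\<le>c. w i j k * C j k)"
        by (rule sum.cong[OF refl]) (rule sum.swap)
      also have "\<dots> = (\<Sum>j\<le>b. \<Sum>i\<le>a. \<Sum>k\<le>c. w i j k * C j k)" by (rule sum.swap)
      also have "\<dots> = (\<Sum>j\<le>b. \<Sum>k\<le>c. \<Sum>i\<le>a. w i j k * C j k)"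
        by (rule sum.cong[OF refl]) (rule sum.swap)
      finally show ?thesis by (simp add: sum_distrib_right)
    qed
    also have "\<dots> = cost C b c z2" unfolding cost_def by (simp add: wi)
    finally show ?thesis by simp
  qed
  ultimately show ?thesis by blast
qed

context adm begin

lemma dd_tri: "dd \<pi> a c \<le> dd \<pi> a b + dd \<pi> b c"
proof (induction "a+b+c" arbitrary: a b c rule: less_induct)
  case less
  show ?case
  proof (cases "a = 0 \<or> b = 0 \<or> c = 0")
    case True
    then show ?thesis
      using dd_nonneg[of a b] dd_nonneg[of b c] dd_le1[of a c] dd_nonneg[of a c]
      by (auto simp: dd_0L dd_0R)
  next
    case False
    then obtain a' b' c' where abc: "a = Suc a'" "b = Suc b'" "c = Suc c'" by (metis not0_implies_Suc)
    have key: "dd \<pi> a c \<le> cost (dd \<pi>) a' b' z1 + cost (dd \<pi>) b' c' z2"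
      if z1: "z1 \<in> couplings \<pi> a' b'" and z2: "z2 \<in> couplings \<pi> b' c'" for z1 z2
    proof -
      have "\<exists>u. cplg (\<pi> a') (\<pi> c') a' c' u \<and> cost (dd \<pi>) a' c' u \<le> cost (dd \<pi>) a' b' z1 + cost (dd \<pi>) b' c' z2"
        using z1 z2 unfolding couplings_iff
        by (rule glue) (use less abc in auto)
      then obtain u where u: "u \<in> couplings \<pi> a' c'" and cu: "cost (dd \<pi>) a' c' u \<le> cost (dd \<pi>) a' b' z1 + cost (dd \<pi>) b' c' z2"
        by (auto simp: couplings_iff)
      show ?thesis using dd_le_cost[OF u] cu abc by simp
    qed
    have "dd \<pi> a c - dd \<pi> a b \<le> cost (dd \<pi>) b' c' z2" if z2: "z2 \<in> couplings \<pi> b' c'" for z2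
    proof -
      have "dd \<pi> a c - cost (dd \<pi>) b' c' z2 \<le> dd \<pi> (Suc a') (Suc b')"
        by (rule dd_ge) (use key z2 in force)
      then show ?thesis using abc by simp
    qed
    then have "dd \<pi> a c - dd \<pi> a b \<le> dd \<pi> (Suc b') (Suc c')" by (rule dd_ge)
    then show ?thesis using abc by simp
  qed
qed

end



lemma sum_if_eq: "k \<le> (N::nat) \<Longrightarrow> (\<Sum>j\<le>N. (if j = k then f j else 0)) = (f k :: real)"
  by (rule trans[OF sum.delta]) auto

lemma sum_if_eq2: "k \<le> (m::nat) \<Longrightarrow> (\<Sum>l\<le>m. \<Sum>j\<le>N. (if l = k then g j else 0)) = (\<Sum>j\<le>(N::nat). g j :: real)"
proof -
  assume k: "k \<le> m"
  have "(\<Sum>l\<le>m. \<Sum>j\<le>N. (if l = k then g j else 0)) = (\<Sum>l\<le>m. (if l = k then (\<Sum>j\<le>N. g j) else 0))"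
    by (rule sum.cong) auto
  also have "\<dots> = (\<Sum>j\<le>N. g j)" using k by (rule sum_if_eq)
  finally show ?thesis .
qed

lemma reroute:
  assumes z: "cplg \<mu> \<nu> m N z" and k: "k \<le> m" "k \<le> N" and le: "\<nu> k \<le> \<mu> k" and Ckk: "C k k = 0"
    and tri: "\<And>l j. l \<le> m \<Longrightarrow> j \<le> N \<Longrightarrow> C l j \<le> C l k + C k j"
  shows "\<exists>z'. cplg \<mu> \<nu> m N z' \<and> cost C m N z' \<le> cost C m N z \<and> z' k k = \<nu> k \<and>
               (\<forall>i\<le>m. i \<le> N \<longrightarrow> z i i \<le> z' i i)"
proof -
  define a where "a l = (if l = k then 0 else z l k)" for l
  define b where "b j = (if j = k then 0 else z k j)" for j
  define SR where "SR = (\<Sum>j\<le>N. b j)"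
  define SC where "SC = (\<Sum>l\<le>m. a l)"
  have znn: "0 \<le> z l j" if "l \<le> m" "j \<le> N" for l j using z that by (simp add: cplg_def)
  have ann: "0 \<le> a l" if "l \<le> m" for l using znn[OF that k(2)] by (simp add: a_def)
  have bnn: "0 \<le> b j" if "j \<le> N" for j using znn[OF k(1) that] by (simp add: b_def)
  have SR_eq: "SR = \<mu> k - z k k"
  proof -
    have "SR = (\<Sum>j\<le>N. z k j - (if j = k then z k k else 0))"
      unfolding SR_def b_def by (rule sum.cong) auto
    also have "\<dots> = \<mu> k - z k k" using z k by (simp add: sum_subtractf cplg_def sum_if_eq)
    finally show ?thesis .
  qed
  have SC_eq: "SC = \<nu> k - z k k"
  proof -
    have "SC = (\<Sum>l\<le>m. z l k - (if l = k then z k k else 0))"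
      unfolding SC_def a_def by (rule sum.cong) auto
    also have "\<dots> = \<nu> k - z k k" using z k by (simp add: sum_subtractf cplg_def sum_if_eq)
    finally show ?thesis .
  qed
  have SCnn: "0 \<le> SC" unfolding SC_def using ann by (auto intro: sum_nonneg)
  have SCSR: "SC \<le> SR" using SR_eq SC_eq le by simp
  show ?thesis
  proof (cases "SR = 0")
    case True
    then have "z k k = \<nu> k" using SCnn SCSR SC_eq by simp
    then show ?thesis using z by auto
  next
    case False
    then have SRpos: "SR > 0" using SCnn SCSR by simp
    define z' where "z' l j = z l j + a l * b j / SR - (if j = k then a l else 0)
        - (if l = k then b j * SC / SR else 0) + (if l = k \<and> j = k then SC else 0)" for l j
    have "cplg \<mu> \<nu> m N z'"
      unfolding cplg_def
    proof (intro conjI allI impI)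
      fix l j assume l: "l \<le> m" and j: "j \<le> N"
      show "0 \<le> z' l j"
      proof (cases "l = k")
        case True
        show ?thesis
        proof (cases "j = k")
          case True then show ?thesis using \<open>l = k\<close> znn[OF l j] SCnn by (simp add: z'_def a_def b_def)
        next
          case False
          have "b j * SC / SR \<le> b j"
            using SRpos SCSR bnn[OF j] by (simp add: divide_le_eq mult_left_mono)
          then show ?thesis using \<open>l = k\<close> False by (simp add: z'_def a_def b_def)
        qed
      next
        case False
        show ?thesis
        proof (cases "j = k")
          case True then show ?thesis using False by (simp add: z'_def a_def b_def)
        next
          case False
          then show ?thesis using \<open>l \<noteq> k\<close> znn[OF l j] ann[OF l] bnn[OF j] SRpos
            by (simp add: z'_def)
        qed
      qed
    next
      fix l assume l: "l \<le> m"
      have "(\<Sum>j\<le>N. z' l j) = (\<Sum>j\<le>N. z l j) + a l * SR / SR - a l - (if l = k then SR * SC / SR else 0)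
            + (if l = k then SC else 0)"
        unfolding z'_def SR_def
        by (simp add: sum.distrib sum_subtractf sum_distrib_left sum_divide_distrib k sum_if_eq
            if_distrib[where f="\<lambda>x. x * _"] sum_distrib_right cong: if_cong)
      also have "\<dots> = \<mu> l" using z l SRpos by (simp add: cplg_def)
      finally show "(\<Sum>j\<le>N. z' l j) = \<mu> l" .
    next
      fix j assume j: "j \<le> N"
      have "(\<Sum>l\<le>m. z' l j) = (\<Sum>l\<le>m. z l j) + SC * b j / SR - (if j = k then SC else 0) - b j * SC / SR
            + (if j = k then SC else 0)"
        unfolding z'_def SC_def
        by (cases "j = k") (simp_all add: sum.distrib sum_subtractf sum_distrib_left sum_divide_distrib k sum_if_eq
            sum_distrib_right cong: if_cong)
      also have "\<dots> = \<nu> j" using z j SRpos by (simp add: cplg_def)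
      finally show "(\<Sum>l\<le>m. z' l j) = \<nu> j" .
    qed
    moreover have "cost C m N z' \<le> cost C m N z"
    proof -
      have e1: "(\<Sum>l\<le>m. \<Sum>j\<le>N. (if j = k then a l else 0) * C l j) = (\<Sum>l\<le>m. a l * C l k)"
        using k by (simp add: if_distrib[where f="\<lambda>x. x * _"] sum_if_eq cong: if_cong)
      have e2: "(\<Sum>l\<le>m. \<Sum>j\<le>N. (if l = k then b j * SC / SR else 0) * C l j) = (\<Sum>j\<le>N. b j * SC / SR * C k j)"
      proof -
        have "(\<Sum>l\<le>m. \<Sum>j\<le>N. (if l = k then b j * SC / SR else 0) * C l j) =
              (\<Sum>l\<le>m. \<Sum>j\<le>N. (if l = k then b j * SC / SR * C k j else 0))"
          by (intro sum.cong refl) auto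
        also have "\<dots> = (\<Sum>j\<le>N. b j * SC / SR * C k j)" by (rule sum_if_eq2[OF k(1)])
        finally show ?thesis .
      qed
      have e3: "(\<Sum>l\<le>m. \<Sum>j\<le>N. (if l = k \<and> j = k then SC else 0) * C l j) = SC * C k k"
        using Ckk by (simp add: if_distrib[where f="\<lambda>x. x * _"] cong: if_cong)
      have "cost C m N z' = cost C m N z + (\<Sum>l\<le>m. \<Sum>j\<le>N. a l * b j / SR * C l j)
          - (\<Sum>l\<le>m. \<Sum>j\<le>N. (if j = k then a l else 0) * C l j)
          - (\<Sum>l\<le>m. \<Sum>j\<le>N. (if l = k then b j * SC / SR else 0) * C l j)
          + (\<Sum>l\<le>m. \<Sum>j\<le>N. (if l = k \<and> j = k then SC else 0) * C l j)"
        unfolding cost_def z'_def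
        by (simp only: ring_distribs sum.distrib sum_subtractf)
      also have "\<dots> = cost C m N z + (\<Sum>l\<le>m. \<Sum>j\<le>N. a l * b j / SR * C l j)
          - (\<Sum>l\<le>m. a l * C l k) - (\<Sum>j\<le>N. b j * SC / SR * C k j)"
        using e1 e2 e3 Ckk by simp
      also have "(\<Sum>l\<le>m. \<Sum>j\<le>N. a l * b j / SR * C l j) \<le> (\<Sum>l\<le>m. \<Sum>j\<le>N. a l * b j / SR * (C l k + C k j))"
        using ann bnn SRpos tri by (intro sum_mono mult_left_mono) auto
      also have "\<dots> = (\<Sum>l\<le>m. \<Sum>j\<le>N. (a l * C l k) * (b j / SR) + (a l / SR) * (b j * C k j))"
        by (intro sum.cong refl) (simp add: field_simps add_divide_distrib)
      also have "\<dots> = (\<Sum>l\<le>m. a l * C l k) * (\<Sum>j\<le>N. b j / SR) + (\<Sum>l\<le>m. a l / SR) * (\<Sum>j\<le>N. b j * C k j)"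
        by (simp add: sum.distrib sum_product)
      also have "\<dots> = (\<Sum>l\<le>m. a l * C l k) + (SC / SR) * (\<Sum>j\<le>N. b j * C k j)"
        using SRpos unfolding SR_def SC_def by (simp add: sum_divide_distrib[symmetric])
      finally have "cost C m N z' \<le> cost C m N z + ((\<Sum>l\<le>m. a l * C l k) + (SC / SR) * (\<Sum>j\<le>N. b j * C k j))
          - (\<Sum>l\<le>m. a l * C l k) - (\<Sum>j\<le>N. b j * SC / SR * C k j)" by simp
      moreover have "(\<Sum>j\<le>N. b j * SC / SR * C k j) = (SC / SR) * (\<Sum>j\<le>N. b j * C k j)"
        by (simp add: sum_distrib_left mult_ac)
      ultimately show ?thesis by simp
    qed
    moreover have "z' k k = \<nu> k" using SC_eq by (simp add: z'_def a_def b_def)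
    moreover have "\<forall>i\<le>m. i \<le> N \<longrightarrow> z i i \<le> z' i i"
    proof (intro allI impI)
      fix i assume "i \<le> m" "i \<le> N"
      then show "z i i \<le> z' i i" using znn[of i k] znn[of k i] k SRpos SCnn
        by (cases "i = k") (auto simp: z'_def a_def b_def)
    qed
    ultimately show ?thesis by blast
  qed
qed



lemma cplg_le_col: "cplg \<mu> \<nu> m N z \<Longrightarrow> i \<le> m \<Longrightarrow> j \<le> N \<Longrightarrow> z i j \<le> \<nu> j"
proof -
  assume a: "cplg \<mu> \<nu> m N z" "i \<le> m" "j \<le> N"
  have "z i j \<le> (\<Sum>l\<le>m. z l j)" by (rule member_le_sum) (use a in \<open>auto simp: cplg_def\<close>)
  then show ?thesis using a by (simp add: cplg_def)
qed

lemma structured: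
  assumes z: "cplg \<mu> \<nu> m N z" and mN: "m \<le> N" and le: "\<And>k. k \<le> m \<Longrightarrow> \<nu> k \<le> \<mu> k"
    and Ckk: "\<And>k. k \<le> m \<Longrightarrow> C k k = 0"
    and tri: "\<And>l k j. l \<le> m \<Longrightarrow> k \<le> m \<Longrightarrow> j \<le> N \<Longrightarrow> C l j \<le> C l k + C k j"
  shows "\<exists>z'. cplg \<mu> \<nu> m N z' \<and> cost C m N z' \<le> cost C m N z \<and> (\<forall>k\<le>m. z' k k = \<nu> k)"
proof -
  have "\<exists>z'. cplg \<mu> \<nu> m N z' \<and> cost C m N z' \<le> cost C m N z \<and> (\<forall>k<K. k \<le> m \<longrightarrow> z' k k = \<nu> k)" for K
  proof (induction K)
    case 0 then show ?case using z by auto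
  next
    case (Suc K)
    then obtain z1 where z1: "cplg \<mu> \<nu> m N z1" "cost C m N z1 \<le> cost C m N z"
      "\<forall>k<K. k \<le> m \<longrightarrow> z1 k k = \<nu> k" by blast
    show ?case
    proof (cases "K \<le> m")
      case False
      then have "\<forall>k<Suc K. k \<le> m \<longrightarrow> z1 k k = \<nu> k" using z1(3) by (auto simp: less_Suc_eq)
      then show ?thesis using z1(1,2) by blast
    next
      case True
      obtain z2 where z2: "cplg \<mu> \<nu> m N z2" "cost C m N z2 \<le> cost C m N z1" "z2 K K = \<nu> K"
        "\<forall>i\<le>m. i \<le> N \<longrightarrow> z1 i i \<le> z2 i i"
        using reroute[of \<mu> \<nu> m N z1 K C, OF z1(1) True order_trans[OF True mN] le[OF True] Ckk[OF True] tri[OF _ True]] by auto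
      have "\<forall>k<Suc K. k \<le> m \<longrightarrow> z2 k k = \<nu> k"
      proof (intro allI impI)
        fix k assume k: "k < Suc K" "k \<le> m"
        show "z2 k k = \<nu> k"
        proof (cases "k = K")
          case True then show ?thesis using z2 by simp
        next
          case False
          then have "z1 k k = \<nu> k" using z1(3) k by simp
          moreover have "z1 k k \<le> z2 k k" using z2(4) k mN by simp
          moreover have "z2 k k \<le> \<nu> k" using cplg_le_col[OF z2(1) k(2)] k mN by simp
          ultimately show ?thesis by simp
        qed
      qed
      moreover have "cost C m N z2 \<le> cost C m N z" using z2(2) z1(2) by linarith
      ultimately show ?thesis using z2(1) by blast
    qed
  qed
  from this[of "Suc m"] show ?thesis by auto
qed

lemma struct_offdiag:
  assumes z: "cplg \<mu> \<nu> m N z" and mN: "m \<le> N" and diag: "\<forall>k\<le>m. z k k = \<nu> k"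
    and ij: "i \<le> m" "j \<le> m" "i \<noteq> j"
  shows "z i j = 0"
proof -
  have "\<nu> j = (\<Sum>l\<le>m. z l j)" using z ij mN by (simp add: cplg_def)
  also have "\<dots> = z j j + (\<Sum>l\<in>{..m} - {j}. z l j)" using ij sum.remove[of "{..m}" j "\<lambda>l. z l j"] by simp
  finally have "(\<Sum>l\<in>{..m} - {j}. z l j) = 0" using diag ij by simp
  moreover have "\<forall>l\<in>{..m} - {j}. 0 \<le> z l j" using z ij mN by (simp add: cplg_def)
  ultimately show ?thesis using ij sum_nonneg_eq_0_iff[of "{..m} - {j}" "\<lambda>l. z l j"] by auto
qed



lemma step1:
  assumes z: "cplg \<mu>0 \<nu> M n z" and Mn: "M < n" and diag: "\<forall>k\<le>M. z k k = \<nu> k"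
    and ord: "\<And>k. k \<le> M \<Longrightarrow> \<nu> k \<le> \<mu>1 k \<and> \<mu>1 k \<le> \<mu>0 k"
    and s0: "(\<Sum>k\<le>M. \<mu>0 k) = 1" and s1: "(\<Sum>k\<le>Suc M. \<mu>1 k) = 1"
    and Cle: "\<And>k j. k \<le> M \<Longrightarrow> M < j \<Longrightarrow> j \<le> n \<Longrightarrow> C (Suc M) j \<le> C k j"
  shows "\<exists>z'. cplg \<mu>1 \<nu> (Suc M) n z' \<and> cost C (Suc M) n z' \<le> cost C M n z"
proof -
  define \<rho> where "\<rho> k = (\<mu>0 k - \<mu>1 k) / (\<mu>0 k - \<nu> k)" for k
  define w where "w k j = (if j \<le> M then 0 else z k j)" for k j
  define z' where "z' i j = (if i \<le> M then z i j - \<rho> i * w i j else (\<Sum>k\<le>M. \<rho> k * w k j))" for i j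
  have znn: "0 \<le> z i j" if "i \<le> M" "j \<le> n" for i j using z that by (simp add: cplg_def)
  have wnn: "0 \<le> w i j" if "i \<le> M" "j \<le> n" for i j using znn[OF that] by (simp add: w_def)
  have rho01: "0 \<le> \<rho> k \<and> \<rho> k \<le> 1" if "k \<le> M" for k
    using ord[OF that] by (auto simp: \<rho>_def divide_le_eq_1 intro!: divide_nonneg_nonneg)
  have rhoeq: "\<rho> k * (\<mu>0 k - \<nu> k) = \<mu>0 k - \<mu>1 k" if "k \<le> M" for k
    using ord[OF that] by (cases "\<mu>0 k = \<nu> k") (auto simp: \<rho>_def)
  have wsum: "(\<Sum>j\<le>n. w k j) = \<mu>0 k - \<nu> k" if k: "k \<le> M" for k
  proof -
    have "(\<Sum>j\<le>n. z k j - w k j) = (\<Sum>j\<le>n. (if j = k then \<nu> k else 0))"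
    proof (rule sum.cong[OF refl])
      fix j assume "j \<in> {..n}"
      then show "z k j - w k j = (if j = k then \<nu> k else 0)"
        using struct_offdiag[OF z _ diag k, of j] diag k Mn by (auto simp: w_def)
    qed
    also have "\<dots> = \<nu> k" using k Mn by (intro sum_if_eq) simp
    finally show ?thesis using z k Mn by (simp add: sum_subtractf cplg_def)
  qed
  have "cplg \<mu>1 \<nu> (Suc M) n z'"
    unfolding cplg_def
  proof (intro conjI allI impI)
    fix i j assume i: "i \<le> Suc M" and j: "j \<le> n"
    show "0 \<le> z' i j"
    proof (cases "i \<le> M")
      case True
      then show ?thesis using znn[OF True j] rho01[OF True]
        by (auto simp: z'_def w_def intro: mult_left_le_one_le)
    next
      case False
      then show ?thesis using rho01 wnn j by (auto simp: z'_def intro!: sum_nonneg)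
    qed
  next
    fix i assume i: "i \<le> Suc M"
    show "(\<Sum>j\<le>n. z' i j) = \<mu>1 i"
    proof (cases "i \<le> M")
      case True
      have "(\<Sum>j\<le>n. z' i j) = (\<Sum>j\<le>n. z i j) - \<rho> i * (\<Sum>j\<le>n. w i j)"
        using True by (simp add: z'_def sum_subtractf sum_distrib_left)
      also have "\<dots> = \<mu>1 i" using True wsum[OF True] rhoeq[OF True] z Mn by (simp add: cplg_def)
      finally show ?thesis .
    next
      case False
      then have iM: "i = Suc M" using i by simp
      have "(\<Sum>j\<le>n. z' i j) = (\<Sum>k\<le>M. \<rho> k * (\<Sum>j\<le>n. w k j))"
        using False by (simp add: z'_def sum_distrib_left sum.swap[where A="{..n}"])
      also have "\<dots> = (\<Sum>k\<le>M. \<mu>0 k - \<mu>1 k)" by (rule sum.cong) (auto simp: wsum rhoeq)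
      also have "\<dots> = \<mu>1 (Suc M)" using s0 s1 by (simp add: sum_subtractf)
      finally show ?thesis using iM by simp
    qed
  next
    fix j assume j: "j \<le> n"
    have "(\<Sum>i\<le>Suc M. z' i j) = (\<Sum>i\<le>M. z i j - \<rho> i * w i j) + (\<Sum>k\<le>M. \<rho> k * w k j)"
      by (simp add: z'_def)
    also have "\<dots> = \<nu> j" using z j by (simp add: sum_subtractf cplg_def)
    finally show "(\<Sum>i\<le>Suc M. z' i j) = \<nu> j" .
  qed
  moreover have "cost C (Suc M) n z' \<le> cost C M n z"
  proof -
    have "cost C (Suc M) n z' = cost C M n z - (\<Sum>i\<le>M. \<Sum>j\<le>n. \<rho> i * w i j * C i j)
          + (\<Sum>i\<le>M. \<Sum>j\<le>n. \<rho> i * w i j * C (Suc M) j)"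
      unfolding cost_def
      by (simp add: z'_def left_diff_distrib sum_subtractf sum_distrib_right sum.swap[where A="{..n}"])
    also have "(\<Sum>i\<le>M. \<Sum>j\<le>n. \<rho> i * w i j * C (Suc M) j) \<le> (\<Sum>i\<le>M. \<Sum>j\<le>n. \<rho> i * w i j * C i j)"
    proof (intro sum_mono)
      fix i j assume i: "i \<in> {..M}" and j: "j \<in> {..n}"
      show "\<rho> i * w i j * C (Suc M) j \<le> \<rho> i * w i j * C i j"
      proof (cases "j \<le> M")
        case True then show ?thesis by (simp add: w_def)
      next
        case False
        then show ?thesis using i j Cle[of i j] rho01[of i] wnn[of i j]
          by (intro mult_left_mono) (auto intro: mult_nonneg_nonneg)
      qed
    qed
    finally show ?thesis by simp
  qed
  ultimately show ?thesis by blast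
qed



lemma sum_upto_if: "m \<le> (n::nat) \<Longrightarrow> (\<Sum>j\<le>n. (if j \<le> m then f j else 0)) = (\<Sum>j\<le>m. f j :: real)"
proof -
  assume mn: "m \<le> n"
  have "(\<Sum>j\<le>n. (if j \<le> m then f j else 0)) = (\<Sum>j\<in>{j\<in>{..n}. j \<le> m}. f j)"
    by (rule sum.inter_filter[symmetric]) simp
  also have "{j\<in>{..n}. j \<le> m} = {..m}" using mn by auto
  finally show ?thesis .
qed

lemma step2:
  assumes z: "cplg \<mu> \<nu>' m (Suc n) z" and mn: "m < n" and diag: "\<forall>k\<le>m. z k k = \<nu>' k"
    and o1: "\<And>j. j \<le> n \<Longrightarrow> \<nu>' j \<le> \<nu> j" and o2: "\<And>k. k \<le> m \<Longrightarrow> \<nu> k \<le> \<mu> k"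
    and s\<mu>: "(\<Sum>i\<le>m. \<mu> i) = 1" and s\<nu>: "(\<Sum>j\<le>n. \<nu> j) = 1"
    and Cnn: "\<And>i j. i \<le> m \<Longrightarrow> j \<le> Suc n \<Longrightarrow> 0 \<le> C i j"
    and Ckk: "\<And>k. k \<le> m \<Longrightarrow> C k k = 0"
    and Cle: "\<And>i j. i \<le> m \<Longrightarrow> m < j \<Longrightarrow> j \<le> n \<Longrightarrow> C i j \<le> C i (Suc n)"
  shows "\<exists>z''. cplg \<mu> \<nu> m n z'' \<and> cost C m n z'' \<le> cost C m (Suc n) z"
proof -
  define \<epsilon> where "\<epsilon> j = \<nu> j - \<nu>' j" for j
  define r where "r i = z i (Suc n)" for i
  define w where "w i j = (if j \<le> m then 0 else z i j)" for i j
  define A where "A i = (\<Sum>j\<le>n. w i j)" for i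
  define s where "s i = (if \<epsilon> i \<le> r i then r i - \<epsilon> i else 0)" for i
  define g where "g i = (if \<epsilon> i \<le> r i then 1 else (\<mu> i - \<nu> i) / A i)" for i
  define D where "D j = (if j \<le> m then 0 else \<nu> j) - (\<Sum>i\<le>m. g i * w i j)" for j
  define S where "S = (\<Sum>i\<le>m. s i)"
  define z'' where "z'' i j = (if i = j then \<nu> i else 0) + g i * w i j + s i * D j / S" for i j
  have mSn: "m \<le> Suc n" using mn by simp
  have znn: "0 \<le> z i j" if "i \<le> m" "j \<le> Suc n" for i j using z that by (simp add: cplg_def)
  have wnn: "0 \<le> w i j" if "i \<le> m" "j \<le> n" for i j using znn[OF that(1)] that by (simp add: w_def)
  have rnn: "0 \<le> r i" if "i \<le> m" for i using znn[OF that] by (simp add: r_def)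
  have snn: "0 \<le> s i" for i by (simp add: s_def)
  have sler: "s i \<le> r i" if "i \<le> m" for i using rnn[OF that] o1[of i] that mn by (simp add: s_def \<epsilon>_def)
  have Snn: "0 \<le> S" unfolding S_def by (simp add: sum_nonneg snn)
  have Aeq: "A i = \<mu> i - \<nu>' i - r i" if i: "i \<le> m" for i
  proof -
    have "(\<Sum>j\<le>n. z i j - w i j) = (\<Sum>j\<le>n. (if j = i then \<nu>' i else 0))"
    proof (rule sum.cong[OF refl])
      fix j assume "j \<in> {..n}"
      then show "z i j - w i j = (if j = i then \<nu>' i else 0)"
        using struct_offdiag[OF z mSn diag i, of j] diag i by (auto simp: w_def)
    qed
    also have "\<dots> = \<nu>' i" using i mn by (intro sum_if_eq) simp
    finally have "(\<Sum>j\<le>n. z i j) - A i = \<nu>' i" by (simp add: A_def sum_subtractf)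
    moreover have "(\<Sum>j\<le>n. z i j) + r i = \<mu> i" using z i by (simp add: cplg_def r_def)
    ultimately show ?thesis by simp
  qed
  have gA: "g i * A i = \<mu> i - \<nu> i - s i" and g01: "0 \<le> g i \<and> g i \<le> 1" if i: "i \<le> m" for i
  proof -
    have e: "\<mu> i - \<nu> i = A i + r i - \<epsilon> i" using Aeq[OF i] by (simp add: \<epsilon>_def)
    have "g i * A i = \<mu> i - \<nu> i - s i \<and> 0 \<le> g i \<and> g i \<le> 1"
    proof (cases "\<epsilon> i \<le> r i")
      case True then show ?thesis using e by (simp add: g_def s_def)
    next
      case False
      then have Apos: "A i > \<mu> i - \<nu> i" using e by simp
      moreover have "0 \<le> \<mu> i - \<nu> i" using o2[OF i] by simp
      ultimately show ?thesis using False by (simp add: g_def s_def divide_le_eq_1)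
    qed
    then show "g i * A i = \<mu> i - \<nu> i - s i" "0 \<le> g i \<and> g i \<le> 1" by auto
  qed
  have Dnn: "0 \<le> D j" if j: "j \<le> n" for j
  proof (cases "j \<le> m")
    case True then show ?thesis by (simp add: D_def w_def)
  next
    case False
    have "(\<Sum>i\<le>m. g i * w i j) \<le> (\<Sum>i\<le>m. w i j)"
      using g01 wnn j by (intro sum_mono) (auto intro: mult_left_le_one_le)
    also have "\<dots> = \<nu>' j" using z j False by (simp add: w_def cplg_def)
    finally show ?thesis using False o1[OF j] by (simp add: D_def)
  qed
  have Dsum: "(\<Sum>j\<le>n. D j) = S"
  proof -
    have h1: "(\<Sum>j\<le>n. D j) = (\<Sum>j\<le>n. (if j \<le> m then 0 else \<nu> j)) - (\<Sum>j\<le>n. \<Sum>i\<le>m. g i * w i j)"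
      by (simp add: D_def sum_subtractf)
    have h2: "(\<Sum>j\<le>n. \<Sum>i\<le>m. g i * w i j) = (\<Sum>i\<le>m. g i * A i)"
      unfolding A_def sum_distrib_left by (rule sum.swap)
    have "(\<Sum>j\<le>n. (if j \<le> m then 0 else \<nu> j)) = (\<Sum>j\<le>n. \<nu> j - (if j \<le> m then \<nu> j else 0))"
      by (rule sum.cong) auto
    also have "\<dots> = 1 - (\<Sum>j\<le>m. \<nu> j)" using mn s\<nu> by (simp add: sum_subtractf sum_upto_if)
    finally have h3: "(\<Sum>j\<le>n. (if j \<le> m then 0 else \<nu> j)) = 1 - (\<Sum>j\<le>m. \<nu> j)" .
    have h4: "(\<Sum>i\<le>m. g i * A i) = (\<Sum>i\<le>m. \<mu> i - \<nu> i - s i)" using gA by simp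
    show ?thesis using h1 h2 h3 h4 s\<mu> by (simp add: sum_subtractf S_def)
  qed
  have sSS: "s i * S / S = s i" if i: "i \<le> m" for i
  proof (cases "S = 0")
    case True
    then have "s i = 0" using i snn sum_nonneg_eq_0_iff[of "{..m}" s] unfolding S_def by auto
    then show ?thesis by simp
  qed simp
  have DSS: "D j * S / S = D j" if j: "j \<le> n" for j
  proof (cases "S = 0")
    case True
    then have "D j = 0" using j Dnn Dsum sum_nonneg_eq_0_iff[of "{..n}" D] by auto
    then show ?thesis by simp
  qed simp
  have "cplg \<mu> \<nu> m n z''"
    unfolding cplg_def
  proof (intro conjI allI impI)
    fix i j assume i: "i \<le> m" and j: "j \<le> n"
    show "0 \<le> z'' i j" unfolding z''_def
      using o1[of i] g01[OF i] wnn[OF i j] snn Dnn[OF j] Snn cplg_nu_nonneg[OF z, of i] i mn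
      by (intro add_nonneg_nonneg divide_nonneg_nonneg mult_nonneg_nonneg) auto
  next
    fix i assume i: "i \<le> m"
    have "(\<Sum>j\<le>n. z'' i j) = \<nu> i + g i * A i + s i * (\<Sum>j\<le>n. D j) / S"
      unfolding z''_def A_def using i mn
      by (simp add: sum.distrib sum_distrib_left sum_divide_distrib sum_if_eq)
    also have "\<dots> = \<mu> i" using gA[OF i] Dsum sSS[OF i] by simp
    finally show "(\<Sum>j\<le>n. z'' i j) = \<mu> i" .
  next
    fix j assume j: "j \<le> n"
    have "(\<Sum>i\<le>m. z'' i j) = (if j \<le> m then \<nu> j else 0) + (\<Sum>i\<le>m. g i * w i j) + D j * S / S"
      unfolding z''_def S_def
      by (simp add: sum.distrib sum_distrib_left sum_distrib_right sum_divide_distrib sum.delta' mult.commute)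
    also have "\<dots> = \<nu> j" using DSS[OF j] by (simp add: D_def)
    finally show "(\<Sum>i\<le>m. z'' i j) = \<nu> j" .
  qed
  moreover have "cost C m n z'' \<le> cost C m (Suc n) z"
  proof -
    have t1: "(\<Sum>i\<le>m. \<Sum>j\<le>n. (if i = j then \<nu> i else 0) * C i j) = 0"
      using Ckk by (intro sum.neutral ballI) auto
    have t2: "(\<Sum>i\<le>m. \<Sum>j\<le>n. g i * w i j * C i j) \<le> (\<Sum>i\<le>m. \<Sum>j\<le>n. w i j * C i j)"
    proof (intro sum_mono)
      fix i j assume i: "i \<in> {..m}" and j: "j \<in> {..n}"
      have "0 \<le> w i j * C i j" using wnn Cnn i j by (auto intro: mult_nonneg_nonneg)
      then have "g i * (w i j * C i j) \<le> w i j * C i j" using g01 i by (auto intro: mult_left_le_one_le)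
      then show "g i * w i j * C i j \<le> w i j * C i j" by (simp add: mult.assoc)
    qed
    have t3: "(\<Sum>i\<le>m. \<Sum>j\<le>n. s i * D j / S * C i j) \<le> (\<Sum>i\<le>m. r i * C i (Suc n))"
    proof -
      have "(\<Sum>i\<le>m. \<Sum>j\<le>n. s i * D j / S * C i j) \<le> (\<Sum>i\<le>m. \<Sum>j\<le>n. s i * D j / S * C i (Suc n))"
      proof (intro sum_mono)
        fix i j assume i: "i \<in> {..m}" and j: "j \<in> {..n}"
        show "s i * D j / S * C i j \<le> s i * D j / S * C i (Suc n)"
        proof (cases "j \<le> m")
          case True then show ?thesis by (simp add: D_def w_def)
        next
          case False then show ?thesis using i j Cle[of i j] snn Dnn Snn
            by (intro mult_left_mono) (auto intro!: divide_nonneg_nonneg mult_nonneg_nonneg)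
        qed
      qed
      also have "\<dots> = (\<Sum>i\<le>m. s i * (\<Sum>j\<le>n. D j) / S * C i (Suc n))"
        by (simp add: sum_distrib_left sum_distrib_right sum_divide_distrib)
      also have "\<dots> = (\<Sum>i\<le>m. s i * C i (Suc n))" using Dsum sSS by simp
      also have "\<dots> \<le> (\<Sum>i\<le>m. r i * C i (Suc n))"
        using sler Cnn by (intro sum_mono mult_right_mono) auto
      finally show ?thesis .
    qed
    have "cost C m n z'' = (\<Sum>i\<le>m. \<Sum>j\<le>n. (if i = j then \<nu> i else 0) * C i j)
        + (\<Sum>i\<le>m. \<Sum>j\<le>n. g i * w i j * C i j) + (\<Sum>i\<le>m. \<Sum>j\<le>n. s i * D j / S * C i j)"
      unfolding cost_def z''_def by (simp add: distrib_right sum.distrib)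
    also have "\<dots> \<le> (\<Sum>i\<le>m. \<Sum>j\<le>n. w i j * C i j) + (\<Sum>i\<le>m. r i * C i (Suc n))"
      using t1 t2 t3 by simp
    also have "\<dots> \<le> cost C m (Suc n) z"
    proof -
      have "(\<Sum>i\<le>m. \<Sum>j\<le>n. w i j * C i j) \<le> (\<Sum>i\<le>m. \<Sum>j\<le>n. z i j * C i j)"
        using znn Cnn by (intro sum_mono) (auto simp: w_def intro: mult_nonneg_nonneg)
      then show ?thesis unfolding cost_def by (simp add: r_def sum.distrib)
    qed
    finally show ?thesis .
  qed
  ultimately show ?thesis by blast
qed



locale admH = adm +
  assumes H: "cond_H \<pi>"
begin

lemma Hstep: "i \<le> k \<Longrightarrow> \<pi> (Suc k) i \<le> \<pi> k i"
  using H unfolding cond_H_def by (metis diff_Suc_1 le_add1 less_Suc_eq_le plus_1_eq_Suc)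

lemma Hchain: "i \<le> m \<Longrightarrow> m \<le> n \<Longrightarrow> \<pi> n i \<le> \<pi> m i"
proof (induction n)
  case 0 then show ?case by simp
next
  case (Suc n)
  show ?case
  proof (cases "m = Suc n")
    case False
    then have "m \<le> n" using Suc by simp
    then show ?thesis using Suc Hstep[of i n] by simp
  qed simp
qed

lemma chain1:
  assumes P: "\<forall>a. 1 \<le> a \<and> a \<le> j \<longrightarrow> dd \<pi> a j \<le> dd \<pi> (a - 1) j"
  shows "k \<le> a \<Longrightarrow> a \<le> j \<Longrightarrow> dd \<pi> a j \<le> dd \<pi> k j"
proof (induction a)
  case 0 then show ?case by simp
next
  case (Suc a)
  show ?case
  proof (cases "k = Suc a")
    case False
    then have "dd \<pi> a j \<le> dd \<pi> k j" using Suc by simp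
    moreover have "dd \<pi> (Suc a) j \<le> dd \<pi> a j" using P Suc by force
    ultimately show ?thesis by simp
  qed simp
qed

lemma chain2:
  assumes P: "\<forall>j'. j \<le> j' \<and> j' < b \<longrightarrow> dd \<pi> i j' \<le> dd \<pi> i (Suc j')"
  shows "j \<le> b \<Longrightarrow> dd \<pi> i j \<le> dd \<pi> i b"
  using P
proof (induction b)
  case 0 then show ?case by simp
next
  case (Suc b)
  show ?case
  proof (cases "j = Suc b")
    case False
    then have "dd \<pi> i j \<le> dd \<pi> i b" using Suc by simp
    moreover have "dd \<pi> i b \<le> dd \<pi> i (Suc b)" using Suc.prems False by simp
    ultimately show ?thesis by simp
  qed simp
qed

lemma struct_dd:
  assumes z: "z \<in> couplings \<pi> m N" and mN: "m \<le> N"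
  shows "\<exists>z'. cplg (\<pi> m) (\<pi> N) m N z' \<and> cost (dd \<pi>) m N z' \<le> cost (dd \<pi>) m N z \<and> (\<forall>k\<le>m. z' k k = \<pi> N k)"
  by (rule structured[OF z[unfolded couplings_iff] mN]) (auto simp: Hchain mN dd_diag dd_tri)

lemma P1: "1 \<le> a \<Longrightarrow> a \<le> b \<Longrightarrow> dd \<pi> a b \<le> dd \<pi> (a - 1) b"
proof (induction b arbitrary: a rule: less_induct)
  case (less b)
  show ?case
  proof (cases "a = b")
    case True then show ?thesis using dd_diag dd_nonneg by simp
  next
    case False
    then obtain a0 where a0: "a = Suc a0" using less by (cases a) auto
    show ?thesis
    proof (cases a0)
      case 0 then show ?thesis using a0 False less dd_le1[of a b] by (simp add: dd_0L)
    next
      case (Suc M)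
      obtain n where n: "b = Suc n" using less by (cases b) auto
      have Mn: "M < n" using a0 Suc n less False by simp
      have "dd \<pi> (Suc (Suc M)) (Suc n) \<le> dd \<pi> (Suc M) (Suc n)"
      proof (rule dd_ge)
        fix z assume z: "z \<in> couplings \<pi> M n"
        obtain z1 where z1: "cplg (\<pi> M) (\<pi> n) M n z1" "cost (dd \<pi>) M n z1 \<le> cost (dd \<pi>) M n z"
          "\<forall>k\<le>M. z1 k k = \<pi> n k"
          using struct_dd[OF z] Mn by auto
        have Cle: "dd \<pi> (Suc M) j \<le> dd \<pi> k j" if "k \<le> M" "M < j" "j \<le> n" for k j
        proof (rule chain1)
          show "\<forall>a. 1 \<le> a \<and> a \<le> j \<longrightarrow> dd \<pi> a j \<le> dd \<pi> (a - 1) j"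
            using less.IH[of j] that n by simp
        qed (use that in auto)
        obtain z' where z': "cplg (\<pi> (Suc M)) (\<pi> n) (Suc M) n z'" "cost (dd \<pi>) (Suc M) n z' \<le> cost (dd \<pi>) M n z1"
        proof -
          have ord: "\<pi> n k \<le> \<pi> (Suc M) k \<and> \<pi> (Suc M) k \<le> \<pi> M k" if "k \<le> M" for k
            using that Mn by (simp add: Hchain)
          show ?thesis using step1[of "\<pi> M" "\<pi> n" M n z1 "\<pi> (Suc M)" "dd \<pi>", OF z1(1) Mn z1(3) ord sum1 sum1 Cle] that by blast
        qed
        have "z' \<in> couplings \<pi> (Suc M) n" using z'(1) by (simp add: couplings_iff)
        from dd_le_cost[OF this] z'(2) z1(2)
        show "dd \<pi> (Suc (Suc M)) (Suc n) \<le> cost (dd \<pi>) M n z" by linarith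
      qed
      then show ?thesis using a0 Suc n by simp
    qed
  qed
qed

lemma P2: "a \<le> b \<Longrightarrow> dd \<pi> a b \<le> dd \<pi> a (Suc b)"
proof (induction b arbitrary: a rule: less_induct)
  case (less b)
  show ?case
  proof (cases "a = b")
    case True then show ?thesis using dd_diag dd_nonneg by simp
  next
    case False
    show ?thesis
    proof (cases a)
      case 0 then show ?thesis by (simp add: dd_0L)
    next
      case (Suc m)
      obtain n where n: "b = Suc n" using less False by (cases b) auto
      have mn: "m < n" using Suc n less False by simp
      have "dd \<pi> (Suc m) (Suc n) \<le> dd \<pi> (Suc m) (Suc (Suc n))"
      proof (rule dd_ge)
        fix z assume z: "z \<in> couplings \<pi> m (Suc n)"
        obtain z1 where z1: "cplg (\<pi> m) (\<pi> (Suc n)) m (Suc n) z1" "cost (dd \<pi>) m (Suc n) z1 \<le> cost (dd \<pi>) m (Suc n) z"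
          "\<forall>k\<le>m. z1 k k = \<pi> (Suc n) k"
          using struct_dd[OF z] mn by auto
        have Cle: "dd \<pi> i j \<le> dd \<pi> i (Suc n)" if "i \<le> m" "m < j" "j \<le> n" for i j
        proof (rule chain2)
          show "\<forall>j'. j \<le> j' \<and> j' < Suc n \<longrightarrow> dd \<pi> i j' \<le> dd \<pi> i (Suc j')"
            using less.IH that n by auto
        qed (use that in auto)
        obtain z' where z': "cplg (\<pi> m) (\<pi> n) m n z'" "cost (dd \<pi>) m n z' \<le> cost (dd \<pi>) m (Suc n) z1"
          using step2[OF z1(1) mn z1(3), of "\<pi> n" "dd \<pi>"] mn Cle
          by (auto simp: Hchain sum1 dd_nonneg dd_diag)
        have "z' \<in> couplings \<pi> m n" using z'(1) by (simp add: couplings_iff)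
        from dd_le_cost[OF this] z'(2) z1(2)
        show "dd \<pi> (Suc m) (Suc n) \<le> cost (dd \<pi>) m (Suc n) z" by linarith
      qed
      then show ?thesis using Suc n by simp
    qed
  qed
qed

end

theorem theorem4:
  fixes \<pi> :: "nat \<Rightarrow> nat \<Rightarrow> real"
  assumes "admissible_seq \<pi>" and "cond_H \<pi>"
  shows "(\<forall>m n :: int. 0 \<le> m \<and> m \<le> n \<longrightarrow> d \<pi> m n \<le> d \<pi> (m - 1) n) \<and>
         (\<forall>m n :: int. -1 \<le> m \<and> m \<le> n \<longrightarrow> d \<pi> m n \<le> d \<pi> m (n + 1))"
proof -
  interpret admH \<pi> using assms by (simp add: admH_def adm_def admH_axioms_def)
  have 1: "d \<pi> m n \<le> d \<pi> (m - 1) n" if "0 \<le> m" "m \<le> n" for m n :: int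
  proof -
    have "dd \<pi> (nat (m + 1)) (nat (n + 1)) \<le> dd \<pi> (nat (m + 1) - 1) (nat (n + 1))"
      using that by (intro P1) auto
    moreover have "nat (m + 1) - 1 = nat (m - 1 + 1)" using that by simp
    ultimately show ?thesis by (simp add: d_def)
  qed
  have 2: "d \<pi> m n \<le> d \<pi> m (n + 1)" if "-1 \<le> m" "m \<le> n" for m n :: int
  proof -
    have "dd \<pi> (nat (m + 1)) (nat (n + 1)) \<le> dd \<pi> (nat (m + 1)) (Suc (nat (n + 1)))"
      using that by (intro P2) auto
    moreover have "Suc (nat (n + 1)) = nat (n + 1 + 1)" using that by simp
    ultimately show ?thesis by (simp add: d_def)
  qed
  show ?thesis using 1 2 by blast
qed


end
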